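(* Fix a history of blocks $H$, and let $r\ge 0$ be the EIP-1559 burning fee per unit of size for the current slot. Consider the Double TFM with all transactions of the same size $s>0$. Assume (i) users cannot overbid, i.e. every bid $(\delta^{CM}_t,\delta^{BP}_t,c_t)$ satisfies $c_t\le v_t$; (ii) the burning fee is not excessively low, i.e. the total size of all transactions $t$ in the mempool with $v_t\ge r$ does not exceed the block capacity; and (iii) every includer and the block producer (of every type) follow the indicated allocation rules and add no fake transactions. Then for every user with value $v_t$, the bid $$b_t=(\delta^{CM}_t,\delta^{BP}_t,c_t)=\bigl(0,\ \mu^{Cost}_{BP},\ \min\{v_t,\ r+\mu^{Cost}_{BP}\}\bigr)$$ is a dominant strategy (it maximizes the user's utility for every choice of the other users' bids), irrespective of the user's beliefs about the other parties.
   Context: Model: in one slot there are users, $m$ includers with distinct orders $1,\dots,m$ (order $1$ is best), and one block producer. Each user has a transaction $t$ of size $s$ with private value $v_t$ per unit of size. An includer chooses an inclusion list (at most $c_{Incl}$ transactions) from the mempool; the block producer, seeing the inclusion lists, builds a block (at most $c_{block}$ transactions). Every transaction in the block pays the burning fee $r\cdot s$. The block producer incurs a cost $\mu^{Cost}_{BP}\ge 0$ per unit of size for every user transaction in its block; each includer incurs a cost $\mu^{Cost}_{CM}\ge0$ per unit of size for every user transaction in its list. Double TFM: a bid is $b_t=(\delta^{CM}_t,\delta^{BP}_t,c_t)$, where $c_t$ is the maximum total amount per unit of size the user pays. The block producer fee of $t$ is $\max\{\min\{\delta^{BP}_t s,\ c_t s-rs\},0\}$, paid to the block producer whenever $t$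 is in the block. The committee fee of $t$ is $\max\{\min\{\delta^{CM}_t s,\ c_t s-rs-\min\{\delta^{BP}_t s, c_t s-rs\}\},0\}$, paid entirely to the includer of smallest order that put $t$ in its inclusion list, and only if $t$ is in the block (otherwise not paid). A user whose transaction is in the (approved) block gets utility $(v_t - r)s$ minus the fees paid; otherwise utility $0$. Indicated allocation rules. Block producer: among transactions with $c_t\ge r+\mu^{Cost}_{BP}$ and $\delta^{BP}_t\ge \mu^{Cost}_{BP}$, include those with the highest block producer fee (deterministic tie-breaking) until the block is full or none remain. Includer of order $j$: compute the set $S$ of transactions the block producer following its rule would include; discard from $S$ transactions whose committee fee is below $\mu^{Cost}_{CM} s$; sort the rest by committee fee in decreasing order (deterministic tie-breaking); includers of order $1,2,\dots$ successively take the next $c_{Incl}$ transactions, and includer $j$ includes its block of positions $(j-1)c_{Incl}+1,\dots,j c_{Incl}$. *)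

theory Defs
  imports Main "HOL.Real"
begin

text \<open>A bid is a triple (delta_CM, delta_BP, c), all per unit of size.\<close>
type_synonym bid = "real \<times> real \<times> real"

definition bid_dCM :: "bid \<Rightarrow> real" where "bid_dCM b = fst b"
definition bid_dBP :: "bid \<Rightarrow> real" where "bid_dBP b = fst (snd b)"
definition bid_cap :: "bid \<Rightarrow> real" where "bid_cap b = snd (snd b)"

definition bp_fee :: "real \<Rightarrow> real \<Rightarrow> bid \<Rightarrow> real" where
  "bp_fee r s b = max (min (bid_dBP b * s) (bid_cap b * s - r * s)) 0"

definition cm_fee :: "real \<Rightarrow> real \<Rightarrow> bid \<Rightarrow> real" where
  "cm_fee r s b = max (min (bid_dCM b * s)
      (bid_cap b * s - r * s - min (bid_dBP b * s) (bid_cap b * s - r * s))) 0"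

definition beats :: "('a \<Rightarrow> real) \<Rightarrow> ('a \<Rightarrow> nat) \<Rightarrow> 'a \<Rightarrow> 'a \<Rightarrow> bool" where
  "beats key p x y \<longleftrightarrow> key x > key y \<or> (key x = key y \<and> p x < p y)"

definition rank_pos :: "'a set \<Rightarrow> ('a \<Rightarrow> bool) \<Rightarrow> ('a \<Rightarrow> real) \<Rightarrow> ('a \<Rightarrow> nat) \<Rightarrow> 'a \<Rightarrow> nat" where
  "rank_pos A P key p y = card {u \<in> A. P u \<and> beats key p u y}"

text \<open>Block producer's indicated rule: among eligible transactions, greedily take
  those with the highest block producer fee until the block (capacity cblock
  transactions) is full.  Tie-breaking is deterministic, given by an injective
  priority that may depend on the bid profile.\<close>
definition bp_eligible :: "real \<Rightarrow> real \<Rightarrow> bid \<Rightarrow> bool" where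
  "bp_eligible r muBP b \<longleftrightarrow> bid_cap b \<ge> r + muBP \<and> bid_dBP b \<ge> muBP"

definition bp_block :: "'a set \<Rightarrow> real \<Rightarrow> real \<Rightarrow> real \<Rightarrow> nat \<Rightarrow>
    (('a \<Rightarrow> bid) \<Rightarrow> 'a \<Rightarrow> nat) \<Rightarrow> ('a \<Rightarrow> bid) \<Rightarrow> 'a set" where
  "bp_block T r s muBP cblock prioBP b =
     {t \<in> T. bp_eligible r muBP (b t) \<and>
        rank_pos T (\<lambda>u. bp_eligible r muBP (b u)) (\<lambda>u. bp_fee r s (b u)) (prioBP b) t < cblock}"

text \<open>Includers' indicated rule: S = the block the producer would build; keep those
  with committee fee at least muCM * s; sort by committee fee (decreasing,
  deterministic tie-breaking); includer j (1 \<le> j \<le> m) takes positions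
  (j-1)*cIncl+1, ..., j*cIncl (here 0-based: (j-1)*cIncl \<le> pos < j*cIncl).\<close>
definition incl_list :: "'a set \<Rightarrow> real \<Rightarrow> real \<Rightarrow> real \<Rightarrow> real \<Rightarrow> nat \<Rightarrow> nat \<Rightarrow>
    (('a \<Rightarrow> bid) \<Rightarrow> 'a \<Rightarrow> nat) \<Rightarrow> (('a \<Rightarrow> bid) \<Rightarrow> 'a \<Rightarrow> nat) \<Rightarrow> ('a \<Rightarrow> bid) \<Rightarrow> nat \<Rightarrow> 'a set" where
  "incl_list T r s muBP muCM cblock cIncl prioBP prioCM b j =
     (let S = bp_block T r s muBP cblock prioBP b;
          P = (\<lambda>u. cm_fee r s (b u) \<ge> muCM * s);
          pos = rank_pos S P (\<lambda>u. cm_fee r s (b u)) (prioCM b)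
      in {t \<in> S. P t \<and> (j - 1) * cIncl \<le> pos t \<and> pos t < j * cIncl})"

definition user_utility :: "'a set \<Rightarrow> real \<Rightarrow> real \<Rightarrow> real \<Rightarrow> real \<Rightarrow> nat \<Rightarrow> nat \<Rightarrow> nat \<Rightarrow>
    (('a \<Rightarrow> bid) \<Rightarrow> 'a \<Rightarrow> nat) \<Rightarrow> (('a \<Rightarrow> bid) \<Rightarrow> 'a \<Rightarrow> nat) \<Rightarrow>
    ('a \<Rightarrow> real) \<Rightarrow> ('a \<Rightarrow> bid) \<Rightarrow> 'a \<Rightarrow> real" where
  "user_utility T r s muBP muCM cblock cIncl m prioBP prioCM v b t =
     (if t \<in> bp_block T r s muBP cblock prioBP b then
        (v t - r) * s - bp_fee r s (b t)
          - (if (\<exists>j\<in>{1..m}. t \<in> incl_list T r s muBP muCM cblock cIncl prioBP prioCM b j)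
             then cm_fee r s (b t) else 0)
      else 0)"

end

theory Submission
  imports Defs
begin

theorem mainTheorem1:
  fixes T :: "'a set" and r s muBP muCM :: real and cblock cIncl m :: nat
    and prioBP prioCM :: "('a \<Rightarrow> bid) \<Rightarrow> 'a \<Rightarrow> nat"
    and v :: "'a \<Rightarrow> real" and b :: "'a \<Rightarrow> bid" and t :: 'a and b' :: bid
  assumes "finite T" and "t \<in> T"
    and "r \<ge> 0" and "s > 0" and "muBP \<ge> 0" and "muCM \<ge> 0"
    and "\<And>bb. inj_on (prioBP bb) T" and "\<And>bb. inj_on (prioCM bb) T"
    and no_overbid_others: "\<forall>u \<in> T - {t}. bid_cap (b u) \<le> v u"
    and no_overbid_dev: "bid_cap b' \<le> v t"
    and not_low: "(\<Sum>u \<in> {u \<in> T. v u \<ge> r}. s) \<le> real cblock * s"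
  shows "user_utility T r s muBP muCM cblock cIncl m prioBP prioCM v
            (b(t := (0, muBP, min (v t) (r + muBP)))) t
         \<ge> user_utility T r s muBP muCM cblock cIncl m prioBP prioCM v (b(t := b')) t"
proof -
  define b0 where "b0 = b(t := (0, muBP, min (v t) (r + muBP)))"
  define b1 where "b1 = b(t := b')"
  let ?U = "user_utility T r s muBP muCM cblock cIncl m prioBP prioCM v"
  have cmnn: "\<And>bb. cm_fee r s bb \<ge> 0" unfolding cm_fee_def by simp
  show ?thesis
  proof (cases "v t \<ge> r + muBP")
    case True
    have c0: "bid_cap (b0 t) = r + muBP" "bid_dBP (b0 t) = muBP" "bid_dCM (b0 t) = 0"
      using True by (auto simp: b0_def bid_cap_def bid_dBP_def bid_dCM_def)
    have fee0: "bp_fee r s (b0 t) = muBP * s" using c0 \<open>s>0\<close> \<open>muBP \<ge> 0\<close>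
      by (simp add: bp_fee_def algebra_simps)
    have cm0: "cm_fee r s (b0 t) = 0" using c0 \<open>s>0\<close> \<open>muBP \<ge> 0\<close>
      by (simp add: cm_fee_def)
    have card_le: "card {u \<in> T. v u \<ge> r} \<le> cblock"
    proof -
      have "real (card {u \<in> T. v u \<ge> r}) * s \<le> real cblock * s" using not_low by simp
      then have "real (card {u \<in> T. v u \<ge> r}) \<le> real cblock" using \<open>s>0\<close> by simp
      then show ?thesis by simp
    qed
    let ?A = "{u \<in> T. bp_eligible r muBP (b0 u) \<and>
       beats (\<lambda>u. bp_fee r s (b0 u)) (prioBP b0) u t}"
    have sub: "?A \<subseteq> {u \<in> T. v u \<ge> r} - {t}"
    proof
      fix u assume u: "u \<in> ?A"
      have "u \<noteq> t" using u by (auto simp: beats_def)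
      then have "bid_cap (b u) \<le> v u" "b0 u = b u" using no_overbid_others u by (auto simp: b0_def)
      then show "u \<in> {u \<in> T. v u \<ge> r} - {t}" using u \<open>u \<noteq> t\<close> \<open>muBP \<ge> 0\<close>
        by (auto simp: bp_eligible_def)
    qed
    have "card ?A \<le> card ({u \<in> T. v u \<ge> r} - {t})"
      using sub \<open>finite T\<close> by (intro card_mono) auto
    also have "\<dots> = card {u \<in> T. v u \<ge> r} - 1"
      using True \<open>t \<in> T\<close> \<open>muBP \<ge> 0\<close> by (subst card_Diff_singleton) auto
    also have "\<dots> < cblock"
    proof -
      have "card {u \<in> T. v u \<ge> r} > 0" using True \<open>t \<in> T\<close> \<open>finite T\<close> \<open>muBP \<ge> 0\<close>
        by (subst card_gt_0_iff) auto
      then show ?thesis using card_le by linarith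
    qed
    finally have rk: "card ?A < cblock" .
    have inb: "t \<in> bp_block T r s muBP cblock prioBP b0"
      using rk c0 \<open>t \<in> T\<close> unfolding bp_block_def rank_pos_def bp_eligible_def by auto
    have U0: "?U b0 t = (v t - r) * s - muBP * s"
      using inb fee0 cm0 unfolding user_utility_def by simp
    have "?U b1 t \<le> (v t - r) * s - muBP * s"
    proof (cases "t \<in> bp_block T r s muBP cblock prioBP b1")
      case True
      then have el: "bid_cap b' \<ge> r + muBP" "bid_dBP b' \<ge> muBP"
        by (auto simp: bp_block_def bp_eligible_def b1_def)
      have "bp_fee r s b' \<ge> muBP * s"
      proof -
        have "bid_dBP b' * s \<ge> muBP * s" using el \<open>s>0\<close> by simp
        moreover have "bid_cap b' * s - r * s \<ge> muBP * s" using el \<open>s>0\<close>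
          by (metis add.commute diff_le_eq le_diff_eq left_diff_distrib mult_right_mono less_imp_le)
        ultimately show ?thesis unfolding bp_fee_def by linarith
      qed
      then show ?thesis using True cmnn[of "b1 t"] unfolding user_utility_def b1_def
        by auto
    next
      case False
      have "(v t - r) * s - muBP * s = (v t - r - muBP) * s" by (simp add: algebra_simps)
      moreover have "(v t - r - muBP) * s \<ge> 0" using True \<open>s>0\<close> by simp
      ultimately show ?thesis using False unfolding user_utility_def by simp
    qed
    then show ?thesis using U0 unfolding b0_def b1_def by simp
  next
    case False
    have n1: "t \<notin> bp_block T r s muBP cblock prioBP b1"
      using False no_overbid_dev by (auto simp: bp_block_def bp_eligible_def b1_def)
    have n0: "t \<notin> bp_block T r s muBP cblock prioBP b0"
      using False by (auto simp: bp_block_def bp_eligible_def b0_def bid_cap_def)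
    show ?thesis using n0 n1 unfolding user_utility_def b0_def b1_def by simp
  qed
qed

end
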